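(* Let $a,b,c\in\mathbb{Z}$, let $A=\begin{pmatrix}0&a&-c\\-a&0&b\\c&-b&0\end{pmatrix}$, and consider the graded cluster algebra $\mathcal{A}\big((x_1,x_2,x_3),A,(b,c,a)\big)$. Let $[p_n,\dots,p_1]$ ($n\ge1$) be a mutation path without repetitions and let $z=\operatorname{var}_A[p_n,\dots,p_1]$. Writing $P=A_{[p_n,\dots,p_1]}$, we have $\deg(z)=(-1)^{n+1}P_{32}$ if $p_n=1$, $\deg(z)=(-1)^{n}P_{31}$ if $p_n=2$, and $\deg(z)=(-1)^{n+1}P_{21}$ if $p_n=3$.
   Context: Matrix mutation: for a $3\times3$ skew-symmetric integer matrix $B=(b_{ij})$, $\mu_k(B)=(b'_{ij})$ with $b'_{ij}=-b_{ij}$ if $i=k$ or $j=k$, $b'_{ij}=b_{ij}+\operatorname{sgn}(b_{ik})\max(b_{ik}b_{kj},0)$ otherwise. A seed $((x_1,x_2,x_3),B)$ mutates in direction $k$ to $(x',\mu_k B)$ with $x'_j=x_j$ ($j\ne k$) and $x'_k=\big(\prod_{b_{ik}>0}x_i^{b_{ik}}+\prod_{b_{ik}<0}x_i^{-b_{ik}}\big)/x_k$. Grading: $\deg x_i=g_i$ with $Bg=0$; under mutation at $k$ the degree vector becomes $g'$ with $g'_j=g_j$ ($j\neq k$), $g'_k=-g_k+\sum_{b_{ik}>0}b_{ik}g_i$, and cluster variables are homogeneous of these degrees. A mutation path $[p_n,\dots,p_1]$ means mutate first at $p_1$, then $p_2$, ..., finally $p_n$; it is without repetitions if $p_{i+1}\ne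 p_i$ for all $i$. $A_{[p_n,\dots,p_1]}=\mu_{p_n}\cdots\mu_{p_1}(A)$, and $\operatorname{var}_A[p_n,\dots,p_1]$ is the cluster variable newly created by the final mutation $\mu_{p_n}$ along this path starting from the initial seed. *)

theory Defs
  imports Main
begin

text \<open>3x3 integer matrices are represented as functions nat => nat => int,
  with meaningful indices 1,2,3. Degree vectors as nat => int, indices 1,2,3.\<close>

type_synonym mat3 = "nat \<Rightarrow> nat \<Rightarrow> int"
type_synonym vec3 = "nat \<Rightarrow> int"

definition mat_mutate :: "nat \<Rightarrow> mat3 \<Rightarrow> mat3" where
  "mat_mutate k B = (\<lambda>i j. if i = k \<or> j = k then - B i j
      else B i j + sgn (B i k) * max (B i k * B k j) 0)"

definition deg_mutate :: "nat \<Rightarrow> mat3 \<Rightarrow> vec3 \<Rightarrow> vec3" where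
  "deg_mutate k B g = g(k := - g k + (\<Sum>i\<in>{1,2,3}. if B i k > 0 then B i k * g i else 0))"

text \<open>A mutation path [p_n, ..., p_1] (list head = p_n, mutated last) applied to
  a pair (exchange matrix, degree vector).\<close>
definition mutate_path :: "nat list \<Rightarrow> mat3 \<times> vec3 \<Rightarrow> mat3 \<times> vec3" where
  "mutate_path ps s = foldr (\<lambda>k (B, g). (mat_mutate k B, deg_mutate k B g)) ps s"

definition Amat :: "int \<Rightarrow> int \<Rightarrow> int \<Rightarrow> mat3" where
  "Amat a b c = (\<lambda>i j.
     if i = 1 \<and> j = 2 then a else if i = 1 \<and> j = 3 then - c
     else if i = 2 \<and> j = 1 then - a else if i = 2 \<and> j = 3 then b
     else if i = 3 \<and> j = 1 then c else if i = 3 \<and> j = 2 then - b else 0)"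

definition gvec :: "int \<Rightarrow> int \<Rightarrow> int \<Rightarrow> vec3" where
  "gvec a b c = (\<lambda>i. if i = 1 then b else if i = 2 then c else if i = 3 then a else 0)"

text \<open>Degree of var_A[p_n,...,p_1]: the p_n-th entry of the degree vector after the path.\<close>
definition var_deg :: "int \<Rightarrow> int \<Rightarrow> int \<Rightarrow> nat list \<Rightarrow> int" where
  "var_deg a b c ps = snd (mutate_path ps (Amat a b c, gvec a b c)) (hd ps)"

definition path_mat :: "int \<Rightarrow> int \<Rightarrow> int \<Rightarrow> nat list \<Rightarrow> mat3" where
  "path_mat a b c ps = fst (mutate_path ps (Amat a b c, gvec a b c))"

end

theory Submission
  imports Defs
begin

lemma d1: "deg_mutate 1 (Amat a b c) (\<lambda>i. s * gvec a b c i) =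
    (\<lambda>i. - s * gvec (mat_mutate 1 (Amat a b c) 1 2) (mat_mutate 1 (Amat a b c) 2 3) (mat_mutate 1 (Amat a b c) 3 1) i)"
  apply (simp add: fun_eq_iff deg_mutate_def mat_mutate_def Amat_def gvec_def algebra_simps)
  apply (auto simp: max_def mult_le_0_iff zero_le_mult_iff sgn_if algebra_simps)
  done

lemma d2: "deg_mutate 2 (Amat a b c) (\<lambda>i. s * gvec a b c i) =
    (\<lambda>i. - s * gvec (mat_mutate 2 (Amat a b c) 1 2) (mat_mutate 2 (Amat a b c) 2 3) (mat_mutate 2 (Amat a b c) 3 1) i)"
  apply (simp add: fun_eq_iff deg_mutate_def mat_mutate_def Amat_def gvec_def algebra_simps)
  apply (auto simp: max_def mult_le_0_iff zero_le_mult_iff sgn_if algebra_simps)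
  done

lemma d3: "deg_mutate 3 (Amat a b c) (\<lambda>i. s * gvec a b c i) =
    (\<lambda>i. - s * gvec (mat_mutate 3 (Amat a b c) 1 2) (mat_mutate 3 (Amat a b c) 2 3) (mat_mutate 3 (Amat a b c) 3 1) i)"
  apply (simp add: fun_eq_iff deg_mutate_def mat_mutate_def Amat_def gvec_def algebra_simps)
  apply (auto simp: max_def mult_le_0_iff zero_le_mult_iff sgn_if algebra_simps)
  done

lemma step_deg:
  assumes "k \<in> {1,2,3}"
  shows "deg_mutate k (Amat a b c) (\<lambda>i. s * gvec a b c i) =
    (\<lambda>i. - s * gvec (mat_mutate k (Amat a b c) 1 2) (mat_mutate k (Amat a b c) 2 3) (mat_mutate k (Amat a b c) 3 1) i)"
  using assms d1 d2 d3 by auto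

lemma m1: "mat_mutate 1 (Amat a b c) =
    Amat (mat_mutate 1 (Amat a b c) 1 2) (mat_mutate 1 (Amat a b c) 2 3) (mat_mutate 1 (Amat a b c) 3 1)"
  by (simp add: fun_eq_iff mat_mutate_def Amat_def sgn_if max_def mult.commute mult_le_0_iff)
lemma m2: "mat_mutate 2 (Amat a b c) =
    Amat (mat_mutate 2 (Amat a b c) 1 2) (mat_mutate 2 (Amat a b c) 2 3) (mat_mutate 2 (Amat a b c) 3 1)"
  by (simp add: fun_eq_iff mat_mutate_def Amat_def sgn_if max_def mult.commute mult_le_0_iff)
lemma m3: "mat_mutate 3 (Amat a b c) =
    Amat (mat_mutate 3 (Amat a b c) 1 2) (mat_mutate 3 (Amat a b c) 2 3) (mat_mutate 3 (Amat a b c) 3 1)"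
  by (simp add: fun_eq_iff mat_mutate_def Amat_def sgn_if max_def mult.commute mult_le_0_iff)

lemma step_mat:
  assumes "k \<in> {1,2,3}"
  shows "mat_mutate k (Amat a b c) =
    Amat (mat_mutate k (Amat a b c) 1 2) (mat_mutate k (Amat a b c) 2 3) (mat_mutate k (Amat a b c) 3 1)"
  using assms m1 m2 m3 by auto

lemma step_both:
  assumes k: "k \<in> {1,2,3}"
  shows "\<exists>a'' b'' c''. mat_mutate k (Amat a b c) = Amat a'' b'' c'' \<and>
     deg_mutate k (Amat a b c) (\<lambda>i. s * gvec a b c i) = (\<lambda>i. - s * gvec a'' b'' c'' i)"
  using step_mat[OF k, of a b c] step_deg[OF k, of a b c s] by blast

lemma invariant:
  assumes "set ps \<subseteq> {1,2,3}"
  shows "\<exists>a' b' c'. mutate_path ps (Amat a b c, gvec a b c) = (Amat a' b' c', (\<lambda>i. (-1) ^ length ps * gvec a' b' c' i))"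
  using assms
proof (induction ps)
  case Nil
  then show ?case by (auto simp: mutate_path_def)
next
  case (Cons k ps)
  then obtain a' b' c' where st: "mutate_path ps (Amat a b c, gvec a b c) = (Amat a' b' c', (\<lambda>i. (-1) ^ length ps * gvec a' b' c' i))"
    and k: "k \<in> {1,2,3}" by auto
  obtain a'' b'' c'' where m: "mat_mutate k (Amat a' b' c') = Amat a'' b'' c''"
    and d: "deg_mutate k (Amat a' b' c') (\<lambda>i. (-1) ^ length ps * gvec a' b' c' i) = (\<lambda>i. - ((-1) ^ length ps) * gvec a'' b'' c'' i)"
    using step_both[OF k, of a' b' c' "(-1) ^ length ps"] by blast
  have "mutate_path (k # ps) (Amat a b c, gvec a b c) =
     (mat_mutate k (Amat a' b' c'), deg_mutate k (Amat a' b' c') (\<lambda>i. (-1) ^ length ps * gvec a' b' c' i))"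
    using st by (simp add: mutate_path_def)
  also have "\<dots> = (Amat a'' b'' c'', (\<lambda>i. (-1) ^ length (k # ps) * gvec a'' b'' c'' i))"
    unfolding m d by simp
  finally show ?case by blast
qed

theorem mainTheorem10:
  fixes a b c :: int and ps :: "nat list"
  assumes "ps \<noteq> []" and "set ps \<subseteq> {1,2,3}" and "successively (\<noteq>) ps"
  shows "(hd ps = 1 \<longrightarrow> var_deg a b c ps = (-1) ^ (length ps + 1) * path_mat a b c ps 3 2)
       \<and> (hd ps = 2 \<longrightarrow> var_deg a b c ps = (-1) ^ (length ps) * path_mat a b c ps 3 1)
       \<and> (hd ps = 3 \<longrightarrow> var_deg a b c ps = (-1) ^ (length ps + 1) * path_mat a b c ps 2 1)"
proof -
  obtain a' b' c' where st: "mutate_path ps (Amat a b c, gvec a b c) = (Amat a' b' c', (\<lambda>i. (-1) ^ length ps * gvec a' b' c' i))"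
    using invariant[OF assms(2)] by blast
  show ?thesis unfolding var_deg_def path_mat_def st
    by (simp add: Amat_def gvec_def)
qed

end
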